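(* For every integer $n\ge 5$, up to isomorphism, \[\operatorname{obs}(C_n)=\operatorname{obs}(P_{n-1})\setminus\{C_n\}\quad\text{and}\quad\operatorname{obs}(P_{n-1})=\operatorname{obs}(C_n)\cup\{C_n\}.\]
   Context: All graphs are finite, simple and loopless. $P_n$ and $C_n$ denote the path and cycle on $n$ vertices. A full-homomorphism $\varphi\colon G\to H$ is a map $V(G)\to V(H)$ such that for all $x,y\in V(G)$, $xy\in E(G)$ if and only if $\varphi(x)\varphi(y)\in E(H)$. A full $H$-colouring of $G$ is a full-homomorphism $G\to H$. A minimal $H$-obstruction is a graph $G$ that admits no full $H$-colouring while every proper induced subgraph of $G$ admits one; $\operatorname{obs}(H)$ denotes the set of minimal $H$-obstructions (up to isomorphism). *)

theory Defs
  imports Main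
begin

definition is_graph :: "'a set \<Rightarrow> ('a \<times> 'a) set \<Rightarrow> bool" where
  "is_graph V E \<longleftrightarrow> finite V \<and> E \<subseteq> V \<times> V \<and> sym E \<and> (\<forall>x. (x, x) \<notin> E)"

definition full_hom ::
  "'a set \<Rightarrow> ('a \<times> 'a) set \<Rightarrow> 'b set \<Rightarrow> ('b \<times> 'b) set \<Rightarrow> ('a \<Rightarrow> 'b) \<Rightarrow> bool" where
  "full_hom VG EG VH EH f \<longleftrightarrow>
     f ` VG \<subseteq> VH \<and> (\<forall>x\<in>VG. \<forall>y\<in>VG. (x, y) \<in> EG \<longleftrightarrow> (f x, f y) \<in> EH)"

definition full_colourable ::
  "'a set \<Rightarrow> ('a \<times> 'a) set \<Rightarrow> 'b set \<Rightarrow> ('b \<times> 'b) set \<Rightarrow> bool" where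
  "full_colourable VG EG VH EH \<longleftrightarrow> (\<exists>f. full_hom VG EG VH EH f)"

definition min_obstruction ::
  "'a set \<Rightarrow> ('a \<times> 'a) set \<Rightarrow> 'b set \<Rightarrow> ('b \<times> 'b) set \<Rightarrow> bool" where
  "min_obstruction VG EG VH EH \<longleftrightarrow>
     is_graph VG EG \<and> \<not> full_colourable VG EG VH EH \<and>
     (\<forall>S. S \<subset> VG \<longrightarrow> full_colourable S (EG \<inter> S \<times> S) VH EH)"

definition graph_iso ::
  "'a set \<Rightarrow> ('a \<times> 'a) set \<Rightarrow> 'b set \<Rightarrow> ('b \<times> 'b) set \<Rightarrow> bool" where
  "graph_iso VG EG VH EH \<longleftrightarrow>
     (\<exists>f. bij_betw f VG VH \<and> (\<forall>x\<in>VG. \<forall>y\<in>VG. (x, y) \<in> EG \<longleftrightarrow> (f x, f y) \<in> EH))"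

definition path_V :: "nat \<Rightarrow> nat set" where "path_V m = {0..<m}"
definition path_E :: "nat \<Rightarrow> (nat \<times> nat) set" where
  "path_E m = {(i, j). i < m \<and> j < m \<and> (j = i + 1 \<or> i = j + 1)}"

definition cycle_V :: "nat \<Rightarrow> nat set" where "cycle_V n = {0..<n}"
definition cycle_E :: "nat \<Rightarrow> (nat \<times> nat) set" where
  "cycle_E n = {(i, j). i < n \<and> j < n \<and> i \<noteq> j \<and> (j = (i + 1) mod n \<or> i = (j + 1) mod n)}"

end

theory Submission
  imports Defs
begin

definition sc :: "nat \<Rightarrow> nat \<Rightarrow> nat" where "sc n a = (if Suc a = n then 0 else Suc a)"
definition pd :: "nat \<Rightarrow> nat \<Rightarrow> nat" where "pd n a = (if a = 0 then n - 1 else a - 1)"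

lemma Suc_mod_sc: "i < n \<Longrightarrow> Suc i mod n = sc n i"
  by (auto simp: sc_def)

lemma sc_lt: "a < n \<Longrightarrow> sc n a < n" by (auto simp: sc_def)
lemma pd_lt: "a < n \<Longrightarrow> pd n a < n" by (auto simp: pd_def)
lemma sc_pd: "a < n \<Longrightarrow> sc n (pd n a) = a" by (auto simp: sc_def pd_def)
lemma pd_sc: "a < n \<Longrightarrow> pd n (sc n a) = a" by (auto simp: sc_def pd_def)
lemma sc_ne: "n \<ge> 2 \<Longrightarrow> a < n \<Longrightarrow> sc n a \<noteq> a" by (auto simp: sc_def)
lemma pd_ne: "n \<ge> 2 \<Longrightarrow> a < n \<Longrightarrow> pd n a \<noteq> a" by (auto simp: pd_def)
lemma sc_inj: "a < n \<Longrightarrow> b < n \<Longrightarrow> sc n a = sc n b \<Longrightarrow> a = b" by (metis pd_sc)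

lemma cycE: assumes "n \<ge> 3"
  shows "(a,b) \<in> cycle_E n \<longleftrightarrow> a < n \<and> b < n \<and> (b = sc n a \<or> b = pd n a)"
proof
  assume h: "(a,b) \<in> cycle_E n"
  then have ab: "a < n" "b < n" "b = sc n a \<or> a = sc n b" by (auto simp: cycle_E_def Suc_mod_sc)
  then show "a < n \<and> b < n \<and> (b = sc n a \<or> b = pd n a)"
    by (metis pd_sc)
next
  assume h: "a < n \<and> b < n \<and> (b = sc n a \<or> b = pd n a)"
  have n2: "n \<ge> 2" using assms by simp
  have 1: "b = sc n a \<or> a = sc n b" using h by (metis sc_pd)
  have 2: "a \<noteq> b"
  proof
    assume "a = b"
    then show False using h sc_ne[OF n2, of a] pd_ne[OF n2, of a] by auto
  qed
  have "b = Suc a mod n \<or> a = Suc b mod n" using 1 h by (simp add: Suc_mod_sc)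
  then show "(a,b) \<in> cycle_E n"
    using h 2 unfolding cycle_E_def by simp
qed
definition nbr :: "nat \<Rightarrow> nat \<Rightarrow> nat set" where "nbr n a = {b. (a,b) \<in> cycle_E n}"

lemma nbr_eq: "n \<ge> 3 \<Longrightarrow> a < n \<Longrightarrow> nbr n a = {sc n a, pd n a}"
  by (auto simp: nbr_def cycE sc_lt pd_lt)

lemma sc_pd_ne: "n \<ge> 3 \<Longrightarrow> a < n \<Longrightarrow> sc n a \<noteq> pd n a"
  by (auto simp: sc_def pd_def)

lemma K4: "n \<ge> 5 \<Longrightarrow> a < n \<Longrightarrow> sc n (sc n (sc n (sc n a))) \<noteq> a"
  unfolding sc_def by (auto split: if_splits)

lemma pd_inj: "a < n \<Longrightarrow> b < n \<Longrightarrow> pd n a = pd n b \<Longrightarrow> a = b" by (metis sc_pd)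

lemma F1: assumes n5: "n \<ge> 5" and ab: "a < n" "b < n" and "m < n" and eq: "nbr n a - {m} = nbr n b - {m}"
  shows "a = b"
proof (rule ccontr)
  assume ne: "a \<noteq> b"
  have n3: "n \<ge> 3" using n5 by simp
  have e: "{sc n a, pd n a} - {m} = {sc n b, pd n b} - {m}"
    using eq ab nbr_eq[OF n3, of a] nbr_eq[OF n3, of b] by simp
  have ee: "((x = sc n a \<or> x = pd n a) \<and> x \<noteq> m) = ((x = sc n b \<or> x = pd n b) \<and> x \<noteq> m)" for x
    using arg_cong[OF e, of "\<lambda>S. x \<in> S"] by simp
  have d1: "sc n a \<noteq> pd n a" "sc n b \<noteq> pd n b" using sc_pd_ne[OF n3] ab by auto
  have sa: "sc n a \<noteq> sc n b" using sc_inj ab ne by blast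
  have pa: "pd n a \<noteq> pd n b" using pd_inj ab ne by blast
  have bad: "b = sc n (sc n a) \<Longrightarrow> sc n b = pd n a \<Longrightarrow> False"
  proof -
    assume b1: "b = sc n (sc n a)" and b2: "sc n b = pd n a"
    have "sc n (sc n (sc n (sc n a))) = sc n (pd n a)" using b1 b2 by simp
    also have "\<dots> = a" using sc_pd ab by blast
    finally show False using K4[OF n5 ab(1)] by blast
  qed
  have pb: "pd n b = sc n a \<Longrightarrow> b = sc n (sc n a)" by (metis ab(2) sc_pd)
  have c1: "sc n a \<noteq> m \<Longrightarrow> sc n a = pd n b" using ee[of "sc n a"] sa by metis
  have c2: "pd n a \<noteq> m \<Longrightarrow> pd n a = sc n b" using ee[of "pd n a"] pa by metis
  have c3: "sc n b \<noteq> m \<Longrightarrow> sc n b = pd n a" using ee[of "sc n b"] sa by metis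
  have c4: "pd n b \<noteq> m \<Longrightarrow> pd n b = sc n a" using ee[of "pd n b"] pa by metis
  show False
  proof (cases "sc n a = m")
    case True
    then have x: "pd n a = sc n b" using c2 d1 by metis
    then have "pd n b = sc n a" using c4 True d1 by metis
    then show False using bad pb x by simp
  next
    case False
    then have x: "sc n a = pd n b" using c1 by metis
    then have "sc n b = pd n a" using c2 c3 by metis
    then show False using bad pb x by simp
  qed
qed
lemma K3: "n \<ge> 4 \<Longrightarrow> a < n \<Longrightarrow> sc n (sc n (sc n a)) \<noteq> a"
  unfolding sc_def by (simp split: if_split)

lemma F3: assumes "n \<ge> 3" "h < n" "p < n" "h \<noteq> p"
  shows "card (nbr n h - {p}) = (if p \<in> nbr n h then 1 else 2)"
proof -
  have d: "sc n h \<noteq> pd n h" using sc_pd_ne assms by auto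
  show ?thesis
  proof (cases "p = sc n h")
    case True then show ?thesis using d nbr_eq[OF assms(1,2)] by (simp add: insert_Diff_if)
  next
    case False
    then show ?thesis using d nbr_eq[OF assms(1,2)] by (cases "p = pd n h") (simp_all add: insert_Diff_if)
  qed
qed

lemma card_nbr: "n \<ge> 3 \<Longrightarrow> a < n \<Longrightarrow> card (nbr n a) = 2"
  using nbr_eq sc_pd_ne by simp

lemma nbr_lt: "c \<in> nbr n a \<Longrightarrow> c < n" by (auto simp: nbr_def cycle_E_def)

lemma H4: assumes n5: "n \<ge> 5"
  and h: "\<forall>p<n. \<exists>q<n. \<forall>c<n. c \<noteq> p \<longrightarrow> (P c \<longleftrightarrow> c \<in> nbr n q)"
  shows "\<exists>q<n. \<forall>c<n. P c \<longleftrightarrow> c \<in> nbr n q"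
proof (rule ccontr)
  assume nq: "\<not> ?thesis"
  have n3: "n \<ge> 3" using assms by simp
  show False
  proof (cases "\<forall>c<n. P c")
    case True
    obtain q where q: "q < n" "\<forall>c<n. c \<noteq> 0 \<longrightarrow> (P c \<longleftrightarrow> c \<in> nbr n q)" using h n5 by force
    have "{1..<n} \<subseteq> nbr n q" using q True by auto
    then have "card {1..<n} \<le> card (nbr n q)" using card_mono nbr_eq[OF n3 q(1)] by (metis finite.emptyI finite.insertI)
    then show False using card_nbr[OF n3 q(1)] n5 by simp
  next
    case False
    then obtain p0 where p0: "p0 < n" "\<not> P p0" by auto
    obtain q0 where q0: "q0 < n" "\<forall>c<n. c \<noteq> p0 \<longrightarrow> (P c \<longleftrightarrow> c \<in> nbr n q0)" using h p0 by auto
    have pin: "p0 \<in> nbr n q0"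
    proof (rule ccontr)
      assume "p0 \<notin> nbr n q0"
      then have "\<forall>c<n. P c \<longleftrightarrow> c \<in> nbr n q0" using q0 p0 by metis
      then show False using nq q0 by auto
    qed
    define u where "u = (if p0 = sc n q0 then pd n q0 else sc n q0)"
    have ne: "nbr n q0 = {sc n q0, pd n q0}" using nbr_eq n3 q0 by auto
    have dd: "sc n q0 \<noteq> pd n q0" using sc_pd_ne[OF n3 q0(1)] .
    have u1: "u < n" using q0 by (auto simp: u_def sc_lt pd_lt)
    have u2: "P c \<longleftrightarrow> c = u" if c: "c < n" for c
    proof (cases "c = p0")
      case True then show ?thesis using p0 pin ne dd by (auto simp: u_def)
    next
      case False then show ?thesis using q0 c pin ne dd by (auto simp: u_def)
    qed
    have p1: "sc n u < n" using u1 by (rule sc_lt)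
    obtain q1 where q1: "q1 < n" "\<forall>c<n. c \<noteq> sc n u \<longrightarrow> (P c \<longleftrightarrow> c \<in> nbr n q1)" using h p1 by blast
    have ne1: "nbr n q1 = {sc n q1, pd n q1}" using nbr_eq n3 q1 by auto
    have s1: "sc n q1 < n" "pd n q1 < n" using q1 sc_lt pd_lt by auto
    have a: "sc n q1 = u \<or> sc n q1 = sc n u" using q1(2) s1 ne1 u2 by auto
    have b: "pd n q1 = u \<or> pd n q1 = sc n u" using q1(2) s1 ne1 u2 by auto
    have d1: "sc n q1 \<noteq> pd n q1" using sc_pd_ne[OF n3 q1(1)] .
    show False
    proof (cases "sc n q1 = u")
      case True
      then have "pd n q1 = sc n u" using b d1 by auto
      then have "sc n (sc n (pd n q1)) = sc n (sc n (sc n u))" by simp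
      also have "sc n (sc n (pd n q1)) = sc n (sc n (pd n (pd n u)))"
        using True q1(1) pd_sc by metis
      also have "\<dots> = u" using u1 sc_pd pd_lt by metis
      finally show False using K3[OF _ u1] n5 by simp
    next
      case False
      then have "sc n q1 = sc n u" using a by auto
      then have "q1 = u" using sc_inj q1 u1 by blast
      then have "pd n u = u" using b d1 False by auto
      then show False using pd_ne u1 n5 by simp
    qed
  qed
qed
lemma cycE2: "n \<ge> 3 \<Longrightarrow> a < n \<Longrightarrow> b < n \<Longrightarrow> (a,b) \<in> cycle_E n \<longleftrightarrow> (b = sc n a \<or> a = sc n b)"
  by (metis cycE pd_sc sc_pd)

lemma pathE: assumes "n \<ge> 3" "a < n - 1" "b < n - 1"
  shows "(a,b) \<in> path_E (n - 1) \<longleftrightarrow> (a,b) \<in> cycle_E n"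
proof -
  have "sc n a = Suc a" "sc n b = Suc b" using assms by (auto simp: sc_def)
  then show ?thesis using assms cycE2[of n a b] by (auto simp: path_E_def)
qed

definition rho :: "nat \<Rightarrow> nat \<Rightarrow> nat \<Rightarrow> nat" where
  "rho n k c = (if k < c then c - Suc k else c + n - Suc k)"

lemma rho_lt: "k < n \<Longrightarrow> a < n \<Longrightarrow> rho n k a < n" by (auto simp: rho_def)
lemma rho_lt1: "k < n \<Longrightarrow> a < n \<Longrightarrow> a \<noteq> k \<Longrightarrow> rho n k a < n - 1" by (auto simp: rho_def)
lemma rho_inj: "k < n \<Longrightarrow> a < n \<Longrightarrow> b < n \<Longrightarrow> rho n k a = rho n k b \<Longrightarrow> a = b"
  unfolding rho_def by (cases "k < a"; cases "k < b") (simp_all; arith)+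
lemma rho_sc: "k < n \<Longrightarrow> a < n \<Longrightarrow> rho n k (sc n a) = sc n (rho n k a)"
  unfolding rho_def sc_def
  apply (cases "Suc a = n"; cases "k < a"; cases "k = a")
  apply simp_all
  apply arith+
  done

lemma rho_E: assumes "n \<ge> 3" "k < n" "a < n" "b < n"
  shows "(rho n k a, rho n k b) \<in> cycle_E n \<longleftrightarrow> (a,b) \<in> cycle_E n"
proof -
  have "(rho n k a, rho n k b) \<in> cycle_E n \<longleftrightarrow> (rho n k b = sc n (rho n k a) \<or> rho n k a = sc n (rho n k b))"
    using cycE2 rho_lt assms by blast
  also have "\<dots> \<longleftrightarrow> (rho n k b = rho n k (sc n a) \<or> rho n k a = rho n k (sc n b))"
    using rho_sc assms by simp
  also have "\<dots> \<longleftrightarrow> (b = sc n a \<or> a = sc n b)"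
    using rho_inj assms sc_lt by metis
  also have "\<dots> \<longleftrightarrow> (a,b) \<in> cycle_E n" using cycE2 assms by blast
  finally show ?thesis .
qed

lemma colP_colC: assumes "n \<ge> 3" "full_hom S F (path_V (n - 1)) (path_E (n - 1)) f"
  shows "full_hom S F (cycle_V n) (cycle_E n) f"
proof -
  have im: "f ` S \<subseteq> {0..<n - 1}" using assms by (auto simp: full_hom_def path_V_def)
  then have "f ` S \<subseteq> cycle_V n" by (auto simp: cycle_V_def)
  moreover have "\<forall>x\<in>S. \<forall>y\<in>S. (x, y) \<in> F \<longleftrightarrow> (f x, f y) \<in> cycle_E n"
  proof (intro ballI)
    fix x y assume xy: "x \<in> S" "y \<in> S"
    then have "f x < n - 1" "f y < n - 1" using im by auto
    then show "(x, y) \<in> F \<longleftrightarrow> (f x, f y) \<in> cycle_E n"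
      using assms(2) xy pathE[OF assms(1)] unfolding full_hom_def by auto
  qed
  ultimately show ?thesis by (simp add: full_hom_def)
qed

lemma Csurj_or_P: assumes "n \<ge> 3" "full_hom S F (cycle_V n) (cycle_E n) f"
  shows "f ` S = cycle_V n \<or> full_colourable S F (path_V (n - 1)) (path_E (n - 1))"
proof (cases "f ` S = cycle_V n")
  case False
  have sub: "f ` S \<subseteq> {0..<n}" using assms by (auto simp: full_hom_def cycle_V_def)
  have "f ` S \<subset> {0..<n}" using False sub by (auto simp: cycle_V_def)
  then obtain k where "k \<in> {0..<n} - f ` S" by blast
  then have k: "k < n" "k \<notin> f ` S" by auto
  let ?g = "\<lambda>x. rho n k (f x)"
  have "full_hom S F (path_V (n - 1)) (path_E (n - 1)) ?g"
    unfolding full_hom_def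
  proof (intro conjI ballI)
    show "?g ` S \<subseteq> path_V (n - 1)"
    proof (rule image_subsetI)
      fix x assume "x \<in> S"
      then have "f x < n" "f x \<noteq> k" using sub k by auto
      then show "?g x \<in> path_V (n - 1)" using rho_lt1[OF k(1)] by (simp add: path_V_def)
    qed
  next
    fix x y assume xy: "x \<in> S" "y \<in> S"
    have lt: "f x < n" "f y < n" using sub xy by auto
    have ne: "f x \<noteq> k" "f y \<noteq> k" using k xy by auto
    have "(x,y) \<in> F \<longleftrightarrow> (f x, f y) \<in> cycle_E n" using assms(2) xy by (simp add: full_hom_def)
    also have "\<dots> \<longleftrightarrow> (?g x, ?g y) \<in> cycle_E n" using rho_E[OF assms(1) k(1) lt] by simp
    also have "\<dots> \<longleftrightarrow> (?g x, ?g y) \<in> path_E (n - 1)"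
      using pathE[OF assms(1) rho_lt1[OF k(1) lt(1) ne(1)] rho_lt1[OF k(1) lt(2) ne(2)]] by simp
    finally show "(x,y) \<in> F \<longleftrightarrow> (?g x, ?g y) \<in> path_E (n - 1)" .
  qed
  then show ?thesis by (auto simp: full_colourable_def)
qed simp

definition ind_cyc :: "('a \<times> 'a) set \<Rightarrow> 'a set \<Rightarrow> ('a \<Rightarrow> nat) \<Rightarrow> nat \<Rightarrow> bool" where
  "ind_cyc E Z \<phi> n \<longleftrightarrow> bij_betw \<phi> Z {0..<n} \<and> (\<forall>x\<in>Z. \<forall>y\<in>Z. (x,y) \<in> E \<longleftrightarrow> (\<phi> x, \<phi> y) \<in> cycle_E n)"

definition twin :: "('a \<times> 'a) set \<Rightarrow> 'a set \<Rightarrow> 'a \<Rightarrow> 'a \<Rightarrow> bool" where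
  "twin E Z x z \<longleftrightarrow> z \<in> Z \<and> (\<forall>w\<in>Z. (x,w) \<in> E \<longleftrightarrow> (z,w) \<in> E)"

lemma U: assumes n5: "n \<ge> 5" and ic: "ind_cyc E Z \<phi> n" and a: "a \<in> Z" and uv: "u \<in> Z" "v \<in> Z"
  and h: "\<forall>w\<in>Z - {a}. (u,w) \<in> E \<longleftrightarrow> (v,w) \<in> E"
  shows "u = v"
proof -
  have bij: "bij_betw \<phi> Z {0..<n}" and ed: "\<forall>x\<in>Z. \<forall>y\<in>Z. (x,y) \<in> E \<longleftrightarrow> (\<phi> x, \<phi> y) \<in> cycle_E n"
    using ic by (auto simp: ind_cyc_def)
  have lt: "\<phi> x < n" if "x \<in> Z" for x using bij that by (auto simp: bij_betw_def)
  have "nbr n (\<phi> u) - {\<phi> a} = nbr n (\<phi> v) - {\<phi> a}"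
  proof (rule set_eqI)
    fix c
    show "c \<in> nbr n (\<phi> u) - {\<phi> a} \<longleftrightarrow> c \<in> nbr n (\<phi> v) - {\<phi> a}"
    proof (cases "c < n")
      case True
      then obtain w where w: "w \<in> Z" "\<phi> w = c" using bij by (metis atLeastLessThan_iff bij_betw_def imageE zero_le)
      show ?thesis
      proof (cases "w = a")
        case True then show ?thesis using w by auto
      next
        case False
        then have "c \<noteq> \<phi> a" using w a bij by (metis bij_betw_def inj_on_def)
        moreover have "(u,w) \<in> E \<longleftrightarrow> (v,w) \<in> E" using h w False by auto
        ultimately show ?thesis using ed w uv by (auto simp: nbr_def)
      qed
    next
      case False then show ?thesis using nbr_lt by blast
    qed
  qed
  then have "\<phi> u = \<phi> v" using F1[OF n5] lt a uv by blast
  then show ?thesis using bij uv by (metis bij_betw_def inj_on_def)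
qed

lemma U0: assumes n5: "n \<ge> 5" and ic: "ind_cyc E Z \<phi> n" and uv: "u \<in> Z" "v \<in> Z"
  and h: "\<forall>w\<in>Z. (u,w) \<in> E \<longleftrightarrow> (v,w) \<in> E"
  shows "u = v"
  using U[OF n5 ic uv(1) uv] h by blast

lemma twin_unique: "n \<ge> 5 \<Longrightarrow> ind_cyc E Z \<phi> n \<Longrightarrow> twin E Z x a \<Longrightarrow> twin E Z x b \<Longrightarrow> a = b"
  unfolding twin_def using U0 by metis

lemma twin_self: "x \<in> Z \<Longrightarrow> twin E Z x x" by (simp add: twin_def)

lemma fh_sub: "full_hom T (E \<inter> T \<times> T) V' E' g \<Longrightarrow> x \<in> T \<Longrightarrow> y \<in> T \<Longrightarrow> (x,y) \<in> E \<longleftrightarrow> (g x, g y) \<in> E'"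
  by (auto simp: full_hom_def)

lemma ind_cyc_fin: "ind_cyc E Z \<phi> n \<Longrightarrow> finite Z \<and> card Z = n"
  unfolding ind_cyc_def by (metis bij_betw_finite bij_betw_same_card card_atLeastLessThan finite_atLeastLessThan minus_nat.diff_0)

lemma TW: assumes n5: "n \<ge> 5" and ic: "ind_cyc E Z \<phi> n" and ZT: "Z \<subseteq> T"
  and g: "full_hom T (E \<inter> T \<times> T) (cycle_V n) (cycle_E n) g"
  shows "inj_on g Z" "g ` Z = cycle_V n"
proof -
  show inj: "inj_on g Z"
  proof (rule inj_onI)
    fix u v assume uv: "u \<in> Z" "v \<in> Z" "g u = g v"
    have "\<forall>w\<in>Z. (u,w) \<in> E \<longleftrightarrow> (v,w) \<in> E"
      using fh_sub[OF g] uv ZT by (metis subsetD)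
    then show "u = v" using U0[OF n5 ic] uv by blast
  qed
  have fz: "finite Z" "card Z = n" using ind_cyc_fin[OF ic] by auto
  have sub: "g ` Z \<subseteq> cycle_V n" using g ZT by (auto simp: full_hom_def)
  have "card (g ` Z) = n" using card_image[OF inj] fz by simp
  then show "g ` Z = cycle_V n" using sub by (simp add: card_subset_eq cycle_V_def)
qed

lemma TW2: assumes n5: "n \<ge> 5" and ic: "ind_cyc E Z \<phi> n" and ZT: "Z \<subseteq> T"
  and g: "full_hom T (E \<inter> T \<times> T) (cycle_V n) (cycle_E n) g" and x: "x \<in> T"
  shows "\<exists>z. twin E Z x z \<and> g x = g z"
proof -
  have "g x \<in> cycle_V n" using g x by (auto simp: full_hom_def)
  then obtain z where z: "z \<in> Z" "g z = g x" using TW(2)[OF n5 ic ZT g] by (metis imageE)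
  have "twin E Z x z" unfolding twin_def
  proof (intro conjI ballI)
    show "z \<in> Z" by fact
    fix w assume "w \<in> Z"
    then show "(x,w) \<in> E \<longleftrightarrow> (z,w) \<in> E" using fh_sub[OF g] x z ZT by (metis subsetD)
  qed
  then show ?thesis using z by auto
qed

lemma PAIR: assumes n5: "n \<ge> 5" and ic: "ind_cyc E Z \<phi> n" and ZT: "Z \<subseteq> T"
  and g: "full_hom T (E \<inter> T \<times> T) (cycle_V n) (cycle_E n) g" and xy: "x \<in> T" "y \<in> T"
  and ta: "twin E Z x a" and tb: "twin E Z y b"
  shows "(x,y) \<in> E \<longleftrightarrow> (a,b) \<in> E"
proof -
  obtain z where z: "twin E Z x z" "g x = g z" using TW2[OF n5 ic ZT g xy(1)] by blast
  obtain z' where z': "twin E Z y z'" "g y = g z'" using TW2[OF n5 ic ZT g xy(2)] by blast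
  have "z = a" "z' = b" using twin_unique[OF n5 ic] z z' ta tb by blast+
  moreover have "a \<in> T" "b \<in> T" using ta tb ZT by (auto simp: twin_def)
  ultimately show ?thesis using fh_sub[OF g] xy z z' by metis
qed

lemma SWAP: assumes sym: "sym E" and irr: "\<forall>x. (x,x) \<notin> E" and ic: "ind_cyc E Z \<phi> n"
  and tw: "twin E Z x a" and xZ: "x \<notin> Z"
  shows "ind_cyc E (insert x (Z - {a})) (\<phi> \<circ> (id(x := a))) n"
proof -
  let ?s = "id(x := a)"
  let ?Z' = "insert x (Z - {a})"
  have aZ: "a \<in> Z" using tw by (simp add: twin_def)
  have s_eq: "\<And>u. u \<in> Z - {a} \<Longrightarrow> ?s u = u" using xZ by auto
  have bs: "bij_betw ?s ?Z' Z"
    unfolding bij_betw_def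
  proof
    show "inj_on ?s ?Z'" 
      by (rule inj_onI) (use xZ aZ in \<open>auto split: if_splits\<close>)
    show "?s ` ?Z' = Z" using xZ aZ by auto
  qed
  have bij: "bij_betw (\<phi> \<circ> ?s) ?Z' {0..<n}"
    using bij_betw_trans[OF bs] ic by (auto simp: ind_cyc_def)
  have ed: "\<forall>u\<in>Z. \<forall>v\<in>Z. (u,v) \<in> E \<longleftrightarrow> (\<phi> u, \<phi> v) \<in> cycle_E n" using ic by (simp add: ind_cyc_def)
  have tw': "\<And>w. w \<in> Z \<Longrightarrow> (x,w) \<in> E \<longleftrightarrow> (a,w) \<in> E" using tw by (simp add: twin_def)
  have E2: "(u,v) \<in> E \<longleftrightarrow> (?s u, ?s v) \<in> E" if uv: "u \<in> ?Z'" "v \<in> ?Z'" for u v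
  proof (cases "u = x")
    case True
    show ?thesis
    proof (cases "v = x")
      case True with \<open>u = x\<close> show ?thesis using irr by simp
    next
      case False
      then have "v \<in> Z" "v \<noteq> a" "?s v = v" using uv xZ by auto
      then show ?thesis using tw' True by simp
    qed
  next
    case False
    then have u: "u \<in> Z" "u \<noteq> a" "?s u = u" using uv xZ by auto
    show ?thesis
    proof (cases "v = x")
      case True
      have "(u,x) \<in> E \<longleftrightarrow> (x,u) \<in> E" using sym by (meson symD)
      also have "\<dots> \<longleftrightarrow> (a,u) \<in> E" using tw' u by simp
      also have "\<dots> \<longleftrightarrow> (u,a) \<in> E" using sym by (meson symD)
      finally show ?thesis using True u by simp
    next
      case False
      then have "?s v = v" using uv xZ by auto
      then show ?thesis using u by simp
    qed
  qed
  have "\<forall>u\<in>?Z'. \<forall>v\<in>?Z'. (u,v) \<in> E \<longleftrightarrow> ((\<phi> \<circ> ?s) u, (\<phi> \<circ> ?s) v) \<in> cycle_E n"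
  proof (intro ballI)
    fix u v assume uv: "u \<in> ?Z'" "v \<in> ?Z'"
    then have "?s u \<in> Z" "?s v \<in> Z" using bs by (auto simp: bij_betw_def)
    then show "(u,v) \<in> E \<longleftrightarrow> ((\<phi> \<circ> ?s) u, (\<phi> \<circ> ?s) v) \<in> cycle_E n"
      using E2[OF uv] ed by simp
  qed
  with bij show ?thesis by (simp add: ind_cyc_def)
qed

lemma CASEB: assumes n5: "n \<ge> 5" and G: "is_graph V E" and ic: "ind_cyc E Z \<phi> n" and ZV: "Z \<subseteq> V"
  and hyp: "\<forall>S. S \<subset> V \<longrightarrow> full_colourable S (E \<inter> S \<times> S) (cycle_V n) (cycle_E n)"
  and xy: "x \<in> V" "y \<in> V" "x \<notin> Z" "y \<notin> Z" and ta: "twin E Z x a" and tb: "twin E Z y b"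
  shows "(x,y) \<in> E \<longleftrightarrow> (a,b) \<in> E"
proof -
  have sym: "sym E" and irr: "\<forall>x. (x,x) \<notin> E" using G by (auto simp: is_graph_def)
  have aZ: "a \<in> Z" and bZ: "b \<in> Z" using ta tb by (auto simp: twin_def)
  let ?T = "V - {a}"
  have "?T \<subset> V" using aZ ZV by auto
  then obtain g where g: "full_hom ?T (E \<inter> ?T \<times> ?T) (cycle_V n) (cycle_E n) g"
    using hyp by (auto simp: full_colourable_def)
  let ?Z' = "insert x (Z - {a})"
  have ic': "ind_cyc E ?Z' (\<phi> \<circ> (id(x := a))) n" using SWAP[OF sym irr ic ta xy(3)] .
  have Z'T: "?Z' \<subseteq> ?T" using ZV xy aZ by auto
  have yT: "y \<in> ?T" using xy aZ by auto
  have xT: "x \<in> ?T" using xy aZ by auto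
  obtain c where c: "twin E ?Z' y c" using TW2[OF n5 ic' Z'T g yT] by blast
  have "(x,y) \<in> E \<longleftrightarrow> (x,c) \<in> E"
    using PAIR[OF n5 ic' Z'T g xT yT twin_self[OF insertI1] c] .
  moreover have cZ: "c \<in> ?Z'" using c by (simp add: twin_def)
  have tya: "\<And>w. w \<in> Z - {a} \<Longrightarrow> (y,w) \<in> E \<longleftrightarrow> (c,w) \<in> E" using c by (simp add: twin_def)
  have txa: "\<And>w. w \<in> Z \<Longrightarrow> (x,w) \<in> E \<longleftrightarrow> (a,w) \<in> E" using ta by (simp add: twin_def)
  have tyb: "\<And>w. w \<in> Z \<Longrightarrow> (y,w) \<in> E \<longleftrightarrow> (b,w) \<in> E" using tb by (simp add: twin_def)
  show ?thesis
  proof (cases "c = x")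
    case True
    have "\<forall>w\<in>Z - {a}. (a,w) \<in> E \<longleftrightarrow> (b,w) \<in> E" using txa tya tyb True by auto
    then have "a = b" using U[OF n5 ic aZ aZ bZ] by blast
    then show ?thesis using \<open>(x,y) \<in> E \<longleftrightarrow> (x,c) \<in> E\<close> True irr by simp
  next
    case False
    then have cZ2: "c \<in> Z" using cZ by auto
    have "\<forall>w\<in>Z - {a}. (c,w) \<in> E \<longleftrightarrow> (b,w) \<in> E" using tya tyb by auto
    then have "c = b" using U[OF n5 ic aZ cZ2 bZ] by blast
    then show ?thesis using \<open>(x,y) \<in> E \<longleftrightarrow> (x,c) \<in> E\<close> txa bZ by simp
  qed
qed

lemma cycE_sym: "(a,b) \<in> cycle_E n \<longleftrightarrow> (b,a) \<in> cycle_E n"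
  by (auto simp: cycle_E_def)

lemma QZ: assumes n5: "n \<ge> 5" and G: "is_graph V E" and ic: "ind_cyc E Z \<phi> n"
  and V: "V = insert x Z" and xZ: "x \<notin> Z"
  and hyp: "\<forall>S. S \<subset> V \<longrightarrow> full_colourable S (E \<inter> S \<times> S) (cycle_V n) (cycle_E n)"
  and z: "z \<in> Z"
  shows "\<exists>q\<in>Z. \<forall>w\<in>Z - {z}. (x,w) \<in> E \<longleftrightarrow> (q,w) \<in> E"
proof -
  have n3: "n \<ge> 3" using n5 by simp
  have sym: "sym E" using G by (auto simp: is_graph_def)
  have bij: "bij_betw \<phi> Z {0..<n}" and ed: "\<forall>u\<in>Z. \<forall>v\<in>Z. (u,v) \<in> E \<longleftrightarrow> (\<phi> u, \<phi> v) \<in> cycle_E n"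
    using ic by (auto simp: ind_cyc_def)
  have fz: "finite Z" "card Z = n" using ind_cyc_fin[OF ic] by auto
  let ?T = "V - {z}"
  have T: "?T = insert x (Z - {z})" using V xZ z by auto
  have "?T \<subset> V" using z V by auto
  then obtain g where g: "full_hom ?T (E \<inter> ?T \<times> ?T) (cycle_V n) (cycle_E n) g"
    using hyp by (auto simp: full_colourable_def)
  have gE: "\<And>u v. u \<in> ?T \<Longrightarrow> v \<in> ?T \<Longrightarrow> (u,v) \<in> E \<longleftrightarrow> (g u, g v) \<in> cycle_E n"
    using fh_sub[OF g] by blast
  have glt: "\<And>u. u \<in> ?T \<Longrightarrow> g u < n" using g by (auto simp: full_hom_def cycle_V_def)
  have xT: "x \<in> ?T" using T by auto
  have ZT: "\<And>u. u \<in> Z - {z} \<Longrightarrow> u \<in> ?T" using T by auto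
  have inj: "inj_on g (Z - {z})"
  proof (rule inj_onI)
    fix u v assume uv: "u \<in> Z - {z}" "v \<in> Z - {z}" "g u = g v"
    have "\<forall>w\<in>Z - {z}. (u,w) \<in> E \<longleftrightarrow> (v,w) \<in> E" using gE ZT uv by metis
    then show "u = v" using U[OF n5 ic z] uv by blast
  qed
  show ?thesis
  proof (cases "\<exists>q\<in>Z - {z}. g x = g q")
    case True
    then obtain q where q: "q \<in> Z - {z}" "g x = g q" by blast
    have "\<forall>w\<in>Z - {z}. (x,w) \<in> E \<longleftrightarrow> (q,w) \<in> E" using gE ZT xT q by metis
    then show ?thesis using q by blast
  next
    case False
    define m where "m = g x"
    have m: "m < n" "m \<notin> g ` (Z - {z})" using False glt[OF xT] by (auto simp: m_def)
    have im: "g ` (Z - {z}) = {0..<n} - {m}"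
    proof (rule card_subset_eq)
      show "finite ({0..<n} - {m})" by simp
      show "g ` (Z - {z}) \<subseteq> {0..<n} - {m}" using glt ZT m by auto
      have "card (g ` (Z - {z})) = n - 1" using card_image[OF inj] fz z by simp
      then show "card (g ` (Z - {z})) = card ({0..<n} - {m})" using m by simp
    qed
    have philt: "\<And>u. u \<in> Z \<Longrightarrow> \<phi> u < n" using bij by (auto simp: bij_betw_def)
    have phiinj: "inj_on \<phi> Z" using bij by (simp add: bij_betw_def)
    have key: "(x,w) \<in> E \<longleftrightarrow> (z,w) \<in> E" if w: "w \<in> Z - {z}" for w
    proof -
      define Nw where "Nw = {u \<in> Z - {z}. (w,u) \<in> E}"
      have wT: "w \<in> ?T" using ZT w .
      have gw: "g w < n" "g w \<noteq> m" using glt[OF wT] m w by auto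
      have pw: "\<phi> w < n" "\<phi> z < n" "\<phi> w \<noteq> \<phi> z" using philt w z phiinj by (auto simp: inj_on_def)
      have c1: "g ` Nw = nbr n (g w) - {m}"
      proof
        show "g ` Nw \<subseteq> nbr n (g w) - {m}"
        proof
          fix c assume "c \<in> g ` Nw"
          then obtain u where u: "u \<in> Z - {z}" "(w,u) \<in> E" "c = g u" by (auto simp: Nw_def)
          then show "c \<in> nbr n (g w) - {m}" using gE[OF wT ZT[OF u(1)]] m by (auto simp: nbr_def)
        qed
        show "nbr n (g w) - {m} \<subseteq> g ` Nw"
        proof
          fix c assume c: "c \<in> nbr n (g w) - {m}"
          then have "c \<in> {0..<n} - {m}" using nbr_lt by auto
          then obtain u where u: "u \<in> Z - {z}" "g u = c" using im by (metis imageE)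
          then have "(w,u) \<in> E" using gE[OF wT ZT[OF u(1)]] c by (auto simp: nbr_def)
          then show "c \<in> g ` Nw" using u by (auto simp: Nw_def)
        qed
      qed
      have c2: "\<phi> ` Nw = nbr n (\<phi> w) - {\<phi> z}"
      proof
        show "\<phi> ` Nw \<subseteq> nbr n (\<phi> w) - {\<phi> z}"
        proof
          fix c assume "c \<in> \<phi> ` Nw"
          then obtain u where u: "u \<in> Z - {z}" "(w,u) \<in> E" "c = \<phi> u" by (auto simp: Nw_def)
          then have "\<phi> u \<noteq> \<phi> z" using phiinj z by (auto simp: inj_on_def)
          then show "c \<in> nbr n (\<phi> w) - {\<phi> z}" using ed u w by (auto simp: nbr_def)
        qed
        show "nbr n (\<phi> w) - {\<phi> z} \<subseteq> \<phi> ` Nw"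
        proof
          fix c assume c: "c \<in> nbr n (\<phi> w) - {\<phi> z}"
          then have "c \<in> {0..<n}" using nbr_lt by auto
          then obtain u where u: "u \<in> Z" "\<phi> u = c" using bij by (metis bij_betw_def imageE)
          then have "u \<noteq> z" using c by auto
          moreover have "(w,u) \<in> E" using ed u w c by (auto simp: nbr_def)
          ultimately show "c \<in> \<phi> ` Nw" using u by (auto simp: Nw_def)
        qed
      qed
      have injN: "inj_on g Nw" "inj_on \<phi> Nw"
        using inj phiinj by (auto simp: Nw_def inj_on_def)
      have "card (nbr n (g w) - {m}) = card (nbr n (\<phi> w) - {\<phi> z})"
        using card_image[OF injN(1)] card_image[OF injN(2)] c1 c2 by simp
      then have "(if m \<in> nbr n (g w) then 1 else 2::nat) = (if \<phi> z \<in> nbr n (\<phi> w) then 1 else 2)"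
        unfolding F3[OF n3 gw(1) m(1) gw(2)] F3[OF n3 pw] .
      then have "(m \<in> nbr n (g w)) = (\<phi> z \<in> nbr n (\<phi> w))"
        by (cases "m \<in> nbr n (g w)"; cases "\<phi> z \<in> nbr n (\<phi> w)") simp_all
      moreover have "(x,w) \<in> E \<longleftrightarrow> m \<in> nbr n (g w)"
        using gE[OF xT wT] cycE_sym[of "g x" "g w" n] unfolding nbr_def m_def by simp
      moreover have "(z,w) \<in> E \<longleftrightarrow> \<phi> z \<in> nbr n (\<phi> w)"
        using ed z w cycE_sym[of "\<phi> z" "\<phi> w" n] unfolding nbr_def by simp
      ultimately show ?thesis by simp
    qed
    then show ?thesis using z by blast
  qed
qed

lemma CASEA: assumes n5: "n \<ge> 5" and G: "is_graph V E" and ic: "ind_cyc E Z \<phi> n"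
  and V: "V = insert x Z" and xZ: "x \<notin> Z"
  and hyp: "\<forall>S. S \<subset> V \<longrightarrow> full_colourable S (E \<inter> S \<times> S) (cycle_V n) (cycle_E n)"
  shows "\<exists>a. twin E Z x a"
proof -
  have bij: "bij_betw \<phi> Z {0..<n}" and ed: "\<forall>u\<in>Z. \<forall>v\<in>Z. (u,v) \<in> E \<longleftrightarrow> (\<phi> u, \<phi> v) \<in> cycle_E n"
    using ic by (auto simp: ind_cyc_def)
  let ?i = "inv_into Z \<phi>"
  have iZ: "\<And>c. c < n \<Longrightarrow> ?i c \<in> Z" and ii: "\<And>c. c < n \<Longrightarrow> \<phi> (?i c) = c"
    using bij bij_betw_inv_into_right[OF bij] inv_into_into[of _ \<phi> Z] by (auto simp: bij_betw_def)
  have il: "\<And>w. w \<in> Z \<Longrightarrow> ?i (\<phi> w) = w" using bij bij_betw_inv_into_left by metis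
  have philt: "\<And>u. u \<in> Z \<Longrightarrow> \<phi> u < n" using bij by (auto simp: bij_betw_def)
  define P where "P c = ((x, ?i c) \<in> E)" for c
  have "\<forall>p<n. \<exists>q<n. \<forall>c<n. c \<noteq> p \<longrightarrow> (P c \<longleftrightarrow> c \<in> nbr n q)"
  proof (intro allI impI)
    fix p assume p: "p < n"
    obtain q where q: "q \<in> Z" "\<forall>w\<in>Z - {?i p}. (x,w) \<in> E \<longleftrightarrow> (q,w) \<in> E"
      using QZ[OF n5 G ic V xZ hyp iZ[OF p]] by blast
    have "\<forall>c<n. c \<noteq> p \<longrightarrow> (P c \<longleftrightarrow> c \<in> nbr n (\<phi> q))"
    proof (intro allI impI)
      fix c assume c: "c < n" "c \<noteq> p"
      have "?i c \<noteq> ?i p" using ii c p by metis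
      then have "P c \<longleftrightarrow> (q, ?i c) \<in> E" using q iZ[OF c(1)] by (simp add: P_def)
      also have "\<dots> \<longleftrightarrow> (\<phi> q, c) \<in> cycle_E n" using ed q iZ[OF c(1)] ii[OF c(1)] by metis
      finally show "P c \<longleftrightarrow> c \<in> nbr n (\<phi> q)" by (simp add: nbr_def)
    qed
    then show "\<exists>q<n. \<forall>c<n. c \<noteq> p \<longrightarrow> (P c \<longleftrightarrow> c \<in> nbr n q)" using philt q by blast
  qed
  then obtain q0 where q0: "q0 < n" "\<forall>c<n. P c \<longleftrightarrow> c \<in> nbr n q0" using H4[OF n5] by blast
  have "twin E Z x (?i q0)" unfolding twin_def
  proof (intro conjI ballI)
    show "?i q0 \<in> Z" using iZ q0 by blast
    fix w assume w: "w \<in> Z"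
    have "(x,w) \<in> E \<longleftrightarrow> P (\<phi> w)" using il w by (simp add: P_def)
    also have "\<dots> \<longleftrightarrow> \<phi> w \<in> nbr n q0" using q0 philt w by blast
    also have "\<dots> \<longleftrightarrow> (\<phi> (?i q0), \<phi> w) \<in> cycle_E n" using ii q0 by (simp add: nbr_def)
    also have "\<dots> \<longleftrightarrow> (?i q0, w) \<in> E" using ed iZ q0 w by metis
    finally show "(x,w) \<in> E \<longleftrightarrow> (?i q0, w) \<in> E" .
  qed
  then show ?thesis by blast
qed

lemma M: assumes n5: "n \<ge> 5" and G: "is_graph V E" and ic: "ind_cyc E Z \<phi> n"
  and ZV: "Z \<subseteq> V" and ZneV: "Z \<noteq> V"
  and hyp: "\<forall>S. S \<subset> V \<longrightarrow> full_colourable S (E \<inter> S \<times> S) (cycle_V n) (cycle_E n)"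
  shows "full_colourable V E (cycle_V n) (cycle_E n)"
proof -
  have sym: "sym E" and irr: "\<forall>x. (x,x) \<notin> E" using G by (auto simp: is_graph_def)
  have bij: "bij_betw \<phi> Z {0..<n}" and ed: "\<forall>u\<in>Z. \<forall>v\<in>Z. (u,v) \<in> E \<longleftrightarrow> (\<phi> u, \<phi> v) \<in> cycle_E n"
    using ic by (auto simp: ind_cyc_def)
  have tw_ex: "\<exists>a. twin E Z x a" if x: "x \<in> V" for x
  proof (cases "x \<in> Z")
    case True then show ?thesis using twin_self[OF True] by blast
  next
    case xZ: False
    show ?thesis
    proof (cases "insert x Z = V")
      case True
      show ?thesis using CASEA[OF n5 G ic True[symmetric] xZ hyp] .
    next
      case False
      then have "insert x Z \<subset> V" using x ZV by auto
      then have "full_colourable (insert x Z) (E \<inter> insert x Z \<times> insert x Z) (cycle_V n) (cycle_E n)"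
        using hyp by blast
      then obtain g where g: "full_hom (insert x Z) (E \<inter> insert x Z \<times> insert x Z) (cycle_V n) (cycle_E n) g"
        unfolding full_colourable_def by blast
      have "Z \<subseteq> insert x Z" "x \<in> insert x Z" by auto
      then show ?thesis using TW2[OF n5 ic _ g] by blast
    qed
  qed
  define tw where "tw x = (SOME a. twin E Z x a)" for x
  have tw: "twin E Z x (tw x)" if "x \<in> V" for x
    unfolding tw_def using someI_ex[OF tw_ex[OF that]] .
  have twZ: "tw x = x" if "x \<in> Z" for x
  proof -
    have "x \<in> V" using that ZV by auto
    then show ?thesis using twin_unique[OF n5 ic tw twin_self[OF that]] by simp
  qed
  have pair: "(x,y) \<in> E \<longleftrightarrow> (tw x, tw y) \<in> E" if xy: "x \<in> V" "y \<in> V" for x y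
  proof (cases "x \<in> Z")
    case True
    have "(x,y) \<in> E \<longleftrightarrow> (y,x) \<in> E" using sym by (meson symD)
    also have "\<dots> \<longleftrightarrow> (tw y, x) \<in> E" using tw[OF xy(2)] True by (simp add: twin_def)
    also have "\<dots> \<longleftrightarrow> (x, tw y) \<in> E" using sym by (meson symD)
    finally show ?thesis using twZ True by simp
  next
    case xZ: False
    show ?thesis
    proof (cases "y \<in> Z")
      case True
      then show ?thesis using tw[OF xy(1)] twZ by (simp add: twin_def)
    next
      case False
      show ?thesis using CASEB[OF n5 G ic ZV hyp xy xZ False tw[OF xy(1)] tw[OF xy(2)]] .
    qed
  qed
  have "full_hom V E (cycle_V n) (cycle_E n) (\<phi> \<circ> tw)"
    unfolding full_hom_def
  proof (intro conjI ballI)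
    show "(\<phi> \<circ> tw) ` V \<subseteq> cycle_V n"
    proof (rule image_subsetI)
      fix x assume "x \<in> V"
      then have "tw x \<in> Z" using tw by (simp add: twin_def)
      then have "\<phi> (tw x) \<in> {0..<n}" using bij by (metis bij_betw_apply)
      then show "(\<phi> \<circ> tw) x \<in> cycle_V n" by (simp add: cycle_V_def)
    qed
    fix x y assume xy: "x \<in> V" "y \<in> V"
    have "tw x \<in> Z" "tw y \<in> Z" using tw[OF xy(1)] tw[OF xy(2)] by (simp_all add: twin_def)
    then show "(x,y) \<in> E \<longleftrightarrow> ((\<phi> \<circ> tw) x, (\<phi> \<circ> tw) y) \<in> cycle_E n"
      using pair[OF xy] ed by simp
  qed
  then show ?thesis by (auto simp: full_colourable_def)
qed

lemma SECT: assumes f: "full_hom S F (cycle_V n) (cycle_E n) f" and surj: "f ` S = cycle_V n"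
  shows "\<exists>Z. Z \<subseteq> S \<and> ind_cyc F Z f n"
proof -
  define sel where "sel c = (SOME s. s \<in> S \<and> f s = c)" for c
  have sel: "sel c \<in> S \<and> f (sel c) = c" if "c < n" for c
  proof -
    have "c \<in> f ` S" using surj that by (simp add: cycle_V_def)
    then have "\<exists>s. s \<in> S \<and> f s = c" by blast
    then show ?thesis unfolding sel_def by (rule someI_ex)
  qed
  let ?Z = "sel ` {0..<n}"
  have ZS: "?Z \<subseteq> S" using sel by auto
  have inj: "inj_on f ?Z"
    by (rule inj_onI) (use sel in auto)
  have im: "f ` ?Z = {0..<n}"
  proof
    show "f ` ?Z \<subseteq> {0..<n}" using sel by auto
    show "{0..<n} \<subseteq> f ` ?Z"
    proof
      fix c assume "c \<in> {0..<n}"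
      then have "f (sel c) = c" "sel c \<in> ?Z" using sel by auto
      then show "c \<in> f ` ?Z" by (metis imageI)
    qed
  qed
  have "\<forall>x\<in>?Z. \<forall>y\<in>?Z. (x,y) \<in> F \<longleftrightarrow> (f x, f y) \<in> cycle_E n"
  proof (intro ballI)
    fix x y assume "x \<in> ?Z" "y \<in> ?Z"
    then have "x \<in> S" "y \<in> S" using ZS by auto
    then show "(x,y) \<in> F \<longleftrightarrow> (f x, f y) \<in> cycle_E n" using f by (simp add: full_hom_def)
  qed
  then have "ind_cyc F ?Z f n"
    unfolding ind_cyc_def bij_betw_def using inj im by simp
  then show ?thesis using ZS by blast
qed

lemma ind_cyc_restrict: "ind_cyc (E \<inter> S \<times> S) Z f n \<Longrightarrow> Z \<subseteq> S \<Longrightarrow> ind_cyc E Z f n"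
  unfolding ind_cyc_def by blast

lemma noP: assumes n5: "n \<ge> 5" and ic: "ind_cyc E Z \<phi> n" and ZT: "Z \<subseteq> T"
  shows "\<not> full_colourable T (E \<inter> T \<times> T) (path_V (n - 1)) (path_E (n - 1))"
proof
  assume "full_colourable T (E \<inter> T \<times> T) (path_V (n - 1)) (path_E (n - 1))"
  then obtain h where h: "full_hom T (E \<inter> T \<times> T) (path_V (n - 1)) (path_E (n - 1)) h"
    by (auto simp: full_colourable_def)
  have hc: "full_hom T (E \<inter> T \<times> T) (cycle_V n) (cycle_E n) h" using colP_colC[OF _ h] n5 by simp
  have "h ` Z = cycle_V n" using TW(2)[OF n5 ic ZT hc] .
  moreover have "n - 1 \<in> cycle_V n" using n5 by (simp add: cycle_V_def)
  ultimately obtain z where "z \<in> Z" "h z = n - 1" by (metis imageE)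
  moreover have "h ` T \<subseteq> {0..<n - 1}" using h by (simp add: full_hom_def path_V_def)
  ultimately show False using ZT by force
qed

lemma iso_col: assumes "graph_iso V E (cycle_V n) (cycle_E n)"
  shows "full_colourable V E (cycle_V n) (cycle_E n)"
proof -
  obtain f where f: "bij_betw f V (cycle_V n)" "\<forall>x\<in>V. \<forall>y\<in>V. (x, y) \<in> E \<longleftrightarrow> (f x, f y) \<in> cycle_E n"
    using assms unfolding graph_iso_def by blast
  have "f ` V \<subseteq> cycle_V n" using f(1) by (simp add: bij_betw_def)
  then have "full_hom V E (cycle_V n) (cycle_E n) f" using f(2) by (simp add: full_hom_def)
  then show ?thesis unfolding full_colourable_def by blast
qed

lemma L_AB: assumes n5: "n \<ge> 5" and A: "min_obstruction V E (cycle_V n) (cycle_E n)"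
  shows "min_obstruction V E (path_V (n - 1)) (path_E (n - 1))"
proof -
  have n3: "n \<ge> 3" using n5 by simp
  have G: "is_graph V E" and nC: "\<not> full_colourable V E (cycle_V n) (cycle_E n)"
    and hyp: "\<forall>S. S \<subset> V \<longrightarrow> full_colourable S (E \<inter> S \<times> S) (cycle_V n) (cycle_E n)"
    using A by (auto simp: min_obstruction_def)
  have nP: "\<not> full_colourable V E (path_V (n - 1)) (path_E (n - 1))"
    using nC colP_colC[OF n3] by (auto simp: full_colourable_def)
  have "full_colourable S (E \<inter> S \<times> S) (path_V (n - 1)) (path_E (n - 1))" if S: "S \<subset> V" for S
  proof -
    obtain f where f: "full_hom S (E \<inter> S \<times> S) (cycle_V n) (cycle_E n) f"
      using hyp S unfolding full_colourable_def by blast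
    show ?thesis
    proof (cases "f ` S = cycle_V n")
      case True
      obtain Z where Z: "Z \<subseteq> S" "ind_cyc (E \<inter> S \<times> S) Z f n" using SECT[OF f True] by blast
      have ic: "ind_cyc E Z f n" using ind_cyc_restrict Z by blast
      have "Z \<subseteq> V" "Z \<noteq> V" using Z(1) S by auto
      then have "full_colourable V E (cycle_V n) (cycle_E n)" using M[OF n5 G ic _ _ hyp] by blast
      then show ?thesis using nC by blast
    next
      case False then show ?thesis using Csurj_or_P[OF n3 f] by blast
    qed
  qed
  then show ?thesis using G nP by (simp add: min_obstruction_def)
qed

lemma L_BnIA: assumes n5: "n \<ge> 5" and B: "min_obstruction V E (path_V (n - 1)) (path_E (n - 1))"
  and nI: "\<not> graph_iso V E (cycle_V n) (cycle_E n)"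
  shows "min_obstruction V E (cycle_V n) (cycle_E n)"
proof -
  have n3: "n \<ge> 3" using n5 by simp
  have G: "is_graph V E" and nP: "\<not> full_colourable V E (path_V (n - 1)) (path_E (n - 1))"
    and hyp: "\<forall>S. S \<subset> V \<longrightarrow> full_colourable S (E \<inter> S \<times> S) (path_V (n - 1)) (path_E (n - 1))"
    using B by (auto simp: min_obstruction_def)
  have EV: "E \<inter> V \<times> V = E" using G by (auto simp: is_graph_def)
  have nC: "\<not> full_colourable V E (cycle_V n) (cycle_E n)"
  proof
    assume "full_colourable V E (cycle_V n) (cycle_E n)"
    then obtain f where f: "full_hom V E (cycle_V n) (cycle_E n) f" by (auto simp: full_colourable_def)
    have surj: "f ` V = cycle_V n" using Csurj_or_P[OF n3 f] nP by blast
    obtain Z where Z: "Z \<subseteq> V" "ind_cyc E Z f n" using SECT[OF f surj] by blast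
    show False
    proof (cases "Z = V")
      case True
      then have icV: "ind_cyc E V f n" using Z(2) by simp
      have "bij_betw f V (cycle_V n)" "\<forall>x\<in>V. \<forall>y\<in>V. (x, y) \<in> E \<longleftrightarrow> (f x, f y) \<in> cycle_E n"
        using icV unfolding ind_cyc_def cycle_V_def by simp_all
      then have "graph_iso V E (cycle_V n) (cycle_E n)" unfolding graph_iso_def by blast
      then show False using nI by blast
    next
      case False
      then have "Z \<subset> V" using Z(1) by blast
      then have "full_colourable Z (E \<inter> Z \<times> Z) (path_V (n - 1)) (path_E (n - 1))" using hyp by blast
      then show False using noP[OF n5 Z(2) subset_refl] by blast
    qed
  qed
  have "full_colourable S (E \<inter> S \<times> S) (cycle_V n) (cycle_E n)" if S: "S \<subset> V" for S
  proof -
    have "full_colourable S (E \<inter> S \<times> S) (path_V (n - 1)) (path_E (n - 1))" using hyp S by blast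
    then obtain h where "full_hom S (E \<inter> S \<times> S) (path_V (n - 1)) (path_E (n - 1)) h"
      unfolding full_colourable_def by blast
    then show ?thesis using colP_colC[OF n3] unfolding full_colourable_def by blast
  qed
  then show ?thesis using G nC by (simp add: min_obstruction_def)
qed

lemma L_IB: assumes n5: "n \<ge> 5" and G: "is_graph V E" and I: "graph_iso V E (cycle_V n) (cycle_E n)"
  shows "min_obstruction V E (path_V (n - 1)) (path_E (n - 1))"
proof -
  have n3: "n \<ge> 3" using n5 by simp
  obtain \<psi> where bij: "bij_betw \<psi> V (cycle_V n)" and ed: "\<forall>x\<in>V. \<forall>y\<in>V. (x, y) \<in> E \<longleftrightarrow> (\<psi> x, \<psi> y) \<in> cycle_E n"
    using I by (auto simp: graph_iso_def)
  have ic: "ind_cyc E V \<psi> n" using bij ed by (simp add: ind_cyc_def cycle_V_def)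
  have EV: "E \<inter> V \<times> V = E" using G by (auto simp: is_graph_def)
  have nP: "\<not> full_colourable V E (path_V (n - 1)) (path_E (n - 1))"
    using noP[OF n5 ic subset_refl] EV by simp
  have "full_colourable S (E \<inter> S \<times> S) (path_V (n - 1)) (path_E (n - 1))" if S: "S \<subset> V" for S
  proof -
    have SV: "S \<subseteq> V" using S by (rule psubset_imp_subset)
    have f: "full_hom S (E \<inter> S \<times> S) (cycle_V n) (cycle_E n) \<psi>"
      unfolding full_hom_def
    proof (intro conjI ballI)
      have "\<psi> ` S \<subseteq> \<psi> ` V" using SV by (rule image_mono)
      then show "\<psi> ` S \<subseteq> cycle_V n" using bij_betw_imp_surj_on[OF bij] by simp
      fix x y assume xy: "x \<in> S" "y \<in> S"
      then have "x \<in> V" "y \<in> V" using SV by auto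
      then show "(x,y) \<in> E \<inter> S \<times> S \<longleftrightarrow> (\<psi> x, \<psi> y) \<in> cycle_E n" using ed xy by simp
    qed
    obtain v where v: "v \<in> V" "v \<notin> S" using S by blast
    have "\<psi> v \<in> cycle_V n" using bij_betw_apply[OF bij v(1)] .
    moreover have "\<psi> v \<notin> \<psi> ` S"
    proof
      assume "\<psi> v \<in> \<psi> ` S"
      then obtain s where "s \<in> S" "\<psi> s = \<psi> v" by auto
      moreover have "inj_on \<psi> V" using bij by (simp add: bij_betw_def)
      ultimately show False using v SV by (metis inj_onD subsetD)
    qed
    ultimately have "\<psi> ` S \<noteq> cycle_V n" by blast
    then show ?thesis using Csurj_or_P[OF n3 f] by blast
  qed
  then show ?thesis using G nP by (simp add: min_obstruction_def)
qed

theorem corollary3p9: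
  fixes n :: nat and V :: "'a set" and E :: "('a \<times> 'a) set"
  assumes "n \<ge> 5"
  shows "(min_obstruction V E (cycle_V n) (cycle_E n) \<longleftrightarrow>
            min_obstruction V E (path_V (n - 1)) (path_E (n - 1)) \<and>
            \<not> graph_iso V E (cycle_V n) (cycle_E n))
       \<and> (min_obstruction V E (path_V (n - 1)) (path_E (n - 1)) \<longleftrightarrow>
            min_obstruction V E (cycle_V n) (cycle_E n) \<or>
            (is_graph V E \<and> graph_iso V E (cycle_V n) (cycle_E n)))"
proof -
  have AnI: "min_obstruction V E (cycle_V n) (cycle_E n) \<Longrightarrow> \<not> graph_iso V E (cycle_V n) (cycle_E n)"
    using iso_col[of V E n] unfolding min_obstruction_def by blast
  have BG: "min_obstruction V E (path_V (n - 1)) (path_E (n - 1)) \<Longrightarrow> is_graph V E"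
    by (simp add: min_obstruction_def)
  let ?A = "min_obstruction V E (cycle_V n) (cycle_E n)"
  let ?B = "min_obstruction V E (path_V (n - 1)) (path_E (n - 1))"
  let ?I = "graph_iso V E (cycle_V n) (cycle_E n)"
  have 1: "?A \<longleftrightarrow> ?B \<and> \<not> ?I"
  proof
    assume A: ?A
    show "?B \<and> \<not> ?I" using L_AB[OF assms A] AnI[OF A] by simp
  next
    assume "?B \<and> \<not> ?I"
    then show ?A using L_BnIA[OF assms] by blast
  qed
  have 2: "?B \<longleftrightarrow> ?A \<or> (is_graph V E \<and> ?I)"
  proof
    assume B: ?B
    show "?A \<or> (is_graph V E \<and> ?I)"
    proof (cases ?I)
      case True then show ?thesis using BG[OF B] by simp
    next
      case False then show ?thesis using L_BnIA[OF assms B] by simp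
    qed
  next
    assume "?A \<or> (is_graph V E \<and> ?I)"
    then show ?B
    proof
      assume ?A then show ?B using L_AB[OF assms] by simp
    next
      assume "is_graph V E \<and> ?I" then show ?B using L_IB[OF assms] by blast
    qed
  qed
  show ?thesis using 1 2 by (rule conjI)
qed

end
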